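(* Let $\mu\in(0,1/2)$. For every $c<c_J$ the rotation number of the exterior collision orbit in the Moon component is greater than that in the Earth component: $R^E_{\text{ext}}(c)<R^M_{\text{ext}}(c)$.
   Context: $c_J=-1-2\sqrt{\mu(1-\mu)}$. $K(k)=\int_0^{\pi/2}(1-k^2\sin^2\theta)^{-1/2}d\theta$ is the complete elliptic integral of the first kind. $R^E_{\text{ext}}(c)=\frac{\pi}{2}\frac{1}{\sqrt{1-2k_E^2}K(k_E)}$ with $k_E^2=\frac12\big(1-\frac{1-2\mu-c}{\sqrt{c^2-2(1-2\mu)c+1}}\big)$, and $R^M_{\text{ext}}(c)=\frac{\pi}{2}\frac{1}{\sqrt{1-2k_M^2}K(k_M)}$ with $k_M^2=\frac12\big(1+\frac{c+1-2\mu}{\sqrt{c^2+2(1-2\mu)c+1}}\big)$; these are the ratios of $\eta$- to $\xi$-oscillation periods of the exterior collision orbits of the Euler problem (mass ratio $\mu$) near the Earth and near the Moon, respectively. *)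

theory Defs
  imports "HOL-Analysis.Analysis"
begin

definition elliptic_K :: "real \<Rightarrow> real" where
  "elliptic_K k = integral {0..pi/2} (\<lambda>\<theta>. 1 / sqrt (1 - k^2 * (sin \<theta>)^2))"

definition c_J :: "real \<Rightarrow> real" where
  "c_J \<mu> = -1 - 2 * sqrt (\<mu> * (1 - \<mu>))"

definition kE_sq :: "real \<Rightarrow> real \<Rightarrow> real" where
  "kE_sq \<mu> c = (1 - (1 - 2*\<mu> - c) / sqrt (c^2 - 2*(1 - 2*\<mu>)*c + 1)) / 2"

definition kM_sq :: "real \<Rightarrow> real \<Rightarrow> real" where
  "kM_sq \<mu> c = (1 + (c + 1 - 2*\<mu>) / sqrt (c^2 + 2*(1 - 2*\<mu>)*c + 1)) / 2"

definition R_E_ext :: "real \<Rightarrow> real \<Rightarrow> real" where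
  "R_E_ext \<mu> c = (pi/2) / (sqrt (1 - 2 * kE_sq \<mu> c) * elliptic_K (sqrt (kE_sq \<mu> c)))"

definition R_M_ext :: "real \<Rightarrow> real \<Rightarrow> real" where
  "R_M_ext \<mu> c = (pi/2) / (sqrt (1 - 2 * kM_sq \<mu> c) * elliptic_K (sqrt (kM_sq \<mu> c)))"

end

theory Submission
  imports Defs
begin

lemma K_sqrt: "0 \<le> m \<Longrightarrow> elliptic_K (sqrt m) = integral {0..pi/2} (\<lambda>\<theta>. 1 / sqrt (1 - m * (sin \<theta>)^2))"
  by (simp add: elliptic_K_def)

lemma cont_F: assumes "m < 1" shows "continuous_on {0..pi/2} (\<lambda>\<theta>. 1 / sqrt (1 - m * (sin \<theta>)^2))"
proof -
  have "\<And>\<theta>. m * (sin \<theta>)^2 < 1"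
  proof -
    fix \<theta> :: real
    have "(sin \<theta>)^2 \<le> 1" by (simp add: abs_square_le_1)
    show "m * (sin \<theta>)^2 < 1"
    proof (cases "m \<le> 0")
      case True
      then have "m * (sin \<theta>)^2 \<le> 0" by (simp add: mult_nonpos_nonneg)
      then show ?thesis by linarith
    next
      case False
      then have "m * (sin \<theta>)^2 \<le> m" using \<open>(sin \<theta>)^2 \<le> 1\<close> by (simp add: mult_left_le)
      then show ?thesis using assms by linarith
    qed
  qed
  then have h: "1 - m * (sin \<theta>)^2 \<noteq> 0" for \<theta> by (metis less_irrefl eq_iff_diff_eq_0)
  show ?thesis by (intro continuous_intros) (use h in simp)
qed

lemma K_pos: assumes "0 \<le> m" "m < 1" shows "pi/2 \<le> elliptic_K (sqrt m)"
proof -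
  have "integral {0..pi/2} (\<lambda>\<theta>. 1::real) \<le> integral {0..pi/2} (\<lambda>\<theta>. 1 / sqrt (1 - m * (sin \<theta>)^2))"
  proof (rule integral_le)
    show "(\<lambda>\<theta>. 1 / sqrt (1 - m * (sin \<theta>)^2)) integrable_on {0..pi/2}"
      using cont_F[OF assms(2)] integrable_continuous_interval by blast
    fix \<theta> :: real
    have s: "(sin \<theta>)^2 \<le> 1" by (simp add: abs_square_le_1)
    have a: "0 \<le> m * (sin \<theta>)^2" using assms by simp
    have "m * (sin \<theta>)^2 \<le> m" using s assms by (simp add: mult_left_le)
    then have b: "m * (sin \<theta>)^2 < 1" using assms by linarith
    have "sqrt (1 - m * (sin \<theta>)^2) \<le> 1" using a b by simp
    moreover have "0 < sqrt (1 - m * (sin \<theta>)^2)" using b by simp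
    ultimately show "1 \<le> 1 / sqrt (1 - m * (sin \<theta>)^2)" by (simp add: field_simps)
  qed auto
  then show ?thesis using K_sqrt[OF assms(1)] by simp
qed

lemma key:
  assumes "0 \<le> m1" "m1 < m2" "m2 < 1/2"
  shows "sqrt (1 - 2*m2) * elliptic_K (sqrt m2) < sqrt (1 - 2*m1) * elliptic_K (sqrt m1)"
proof -
  define q where "q = sqrt ((1-2*m2)*(1-m1)/((1-2*m1)*(1-m2)))"
  have m2: "0 \<le> m2" using assms by simp
  have dp: "0 < (1-2*m1)*(1-m2)" using assms by simp
  have "(1-2*m2)*(1-m1) < (1-2*m1)*(1-m2)" using assms by (simp add: algebra_simps)
  then have q1: "q < 1" unfolding q_def
    using dp by simp
  have q0: "0 \<le> q" unfolding q_def using assms by simp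
  have pt: "sqrt (1 - 2*m2) * (1 / sqrt (1 - m2 * (sin \<theta>)^2))
          \<le> q * (sqrt (1 - 2*m1) * (1 / sqrt (1 - m1 * (sin \<theta>)^2)))" for \<theta>
  proof -
    define s where "s = (sin \<theta>)^2"
    have s1: "s \<le> 1" unfolding s_def by (simp add: abs_square_le_1)
    have s0: "0 \<le> s" unfolding s_def by simp
    have "m1 * s \<le> m1" by (rule mult_left_le[OF s1 assms(1)])
    then have d1: "0 < 1 - m1 * s" using assms by linarith
    have "m2 * s \<le> m2" by (rule mult_left_le[OF s1 m2])
    then have d2: "0 < 1 - m2 * s" using assms by linarith
    have L: "sqrt (1 - 2*m2) * (1 / sqrt (1 - m2 * s)) = sqrt ((1-2*m2)/(1-m2 * s))"
      by (simp add: real_sqrt_divide)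
    have R: "q * (sqrt (1 - 2*m1) * (1 / sqrt (1 - m1 * s)))
       = sqrt ((1-2*m2)*(1-m1)/((1-2*m1)*(1-m2)) * ((1-2*m1)/(1-m1 * s)))"
      unfolding q_def by (simp add: real_sqrt_divide real_sqrt_mult)
    have core: "(1-m1 * s)*(1-m2) \<le> (1-m1)*(1-m2 * s)"
    proof -
      have "(m1-m2)*(1-s) \<le> 0" using assms s1
        by (simp add: mult_nonpos_nonneg)
      then show ?thesis by (simp add: algebra_simps)
    qed
    have "(1-2*m2)/(1-m2 * s) \<le> (1-2*m2)*(1-m1)/((1-2*m1)*(1-m2)) * ((1-2*m1)/(1-m1 * s))"
    proof -
      have e: "(1-2*m2)*(1-m1)/((1-2*m1)*(1-m2)) * ((1-2*m1)/(1-m1 * s))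
             = (1-2*m2)*(1-m1)/((1-m2)*(1-m1 * s))"
      proof -
        have g: "x * y / (z * w) * (z / u) = x * y / (w * u)" if "z \<noteq> 0" "w \<noteq> 0" "u \<noteq> 0" for x y z w u :: real
          using that by (simp add: field_simps)
        show ?thesis by (rule g) (use assms d1 in auto)
      qed
      have "(1-2*m2)*((1-m2)*(1-m1 * s)) \<le> (1-2*m2)*(1-m1)*(1-m2 * s)"
        using mult_left_mono[OF core[unfolded mult.commute[of "1-m1 * s"]], of "1-2*m2"] assms by (simp add: mult.assoc)
      have D: "0 < (1-m2)*(1-m1 * s)" using d1 assms by simp
      have "(1-2*m2)/(1-m2 * s) * ((1-m2)*(1-m1 * s)) = ((1-2*m2)*((1-m2)*(1-m1 * s)))/(1-m2 * s)"
        by simp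
      also have "\<dots> \<le> (1-2*m2)*(1-m1)" 
        using pos_divide_le_eq[OF d2] \<open>(1-2*m2)*((1-m2)*(1-m1 * s)) \<le> (1-2*m2)*(1-m1)*(1-m2 * s)\<close> by simp
      finally show ?thesis unfolding e using pos_le_divide_eq[OF D] by simp

    qed
    then show ?thesis using L R unfolding s_def by simp
  qed
  have I1: "(\<lambda>\<theta>. 1 / sqrt (1 - m1 * (sin \<theta>)^2)) integrable_on {0..pi/2}"
    by (rule integrable_continuous_real[OF cont_F]) (use assms in simp)
  have I2: "(\<lambda>\<theta>. 1 / sqrt (1 - m2 * (sin \<theta>)^2)) integrable_on {0..pi/2}"
    by (rule integrable_continuous_real[OF cont_F]) (use assms in simp)
  have "integral {0..pi/2} (\<lambda>\<theta>. sqrt (1 - 2*m2) * (1 / sqrt (1 - m2 * (sin \<theta>)^2)))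
     \<le> integral {0..pi/2} (\<lambda>\<theta>. q * (sqrt (1 - 2*m1) * (1 / sqrt (1 - m1 * (sin \<theta>)^2))))"
    by (rule integral_le) (intro integrable_on_mult_right I1 I2 pt)+
  then have le: "sqrt (1 - 2*m2) * elliptic_K (sqrt m2) \<le> q * (sqrt (1 - 2*m1) * elliptic_K (sqrt m1))"
    unfolding K_sqrt[OF assms(1)] K_sqrt[OF m2] integral_mult_right by (simp only: mult.assoc)
  have "pi/2 \<le> elliptic_K (sqrt m1)" using K_pos[of m1] assms by simp
  then have "0 < elliptic_K (sqrt m1)" using pi_gt_zero by linarith
  moreover have "0 < sqrt (1 - 2*m1)" using assms by simp
  ultimately have pos1: "0 < sqrt (1 - 2*m1) * elliptic_K (sqrt m1)" by simp
  have "q * (sqrt (1 - 2*m1) * elliptic_K (sqrt m1)) < sqrt (1 - 2*m1) * elliptic_K (sqrt m1)"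
    using mult_strict_right_mono[OF q1 pos1] by simp
  with le show ?thesis by linarith
qed

theorem mainTheorem8:
  fixes \<mu> c :: real
  assumes "0 < \<mu>" and "\<mu> < 1/2" and "c < c_J \<mu>"
  shows "R_E_ext \<mu> c < R_M_ext \<mu> c"
proof -
  define a where "a = 1 - 2*\<mu>"
  define t where "t = - c"
  have a0: "0 < a" and a1: "a < 1" using assms unfolding a_def by auto
  have "c_J \<mu> < -1" unfolding c_J_def using assms by simp
  then have t1: "1 < t" using assms(3) unfolding t_def by simp
  define DE where "DE = (t+a)^2 + (1 - a^2)"
  define DM where "DM = (t-a)^2 + (1 - a^2)"
  have aa: "0 < 1 - a^2" using a0 a1 by (simp add: abs_square_less_1)
  have DEe: "c^2 - 2*(1 - 2*\<mu>)*c + 1 = DE" unfolding DE_def t_def a_def by (simp add: algebra_simps power2_eq_square)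
  have DMe: "c^2 + 2*(1 - 2*\<mu>)*c + 1 = DM" unfolding DM_def t_def a_def by (simp add: algebra_simps power2_eq_square)
  have kE: "kE_sq \<mu> c = (1 - (t+a)/sqrt DE)/2" unfolding kE_sq_def DEe unfolding t_def a_def by simp
  have kM: "kM_sq \<mu> c = (1 - (t-a)/sqrt DM)/2" 
  proof -
    have e: "c + 1 - 2*\<mu> = -(t - a)" by (simp add: t_def a_def)
    show ?thesis unfolding kM_sq_def DMe e by (simp add: minus_divide_left)
  qed
  have DE0: "0 < DE" and DM0: "0 < DM" unfolding DE_def DM_def using aa by (auto intro: add_nonneg_pos)
  have "t + a \<le> sqrt DE" by (rule real_le_rsqrt) (use aa in \<open>simp add: DE_def\<close>)
  then have kE0: "0 \<le> kE_sq \<mu> c" unfolding kE using DE0 by (simp add: divide_simps)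
  have "0 < (t-a)/sqrt DM" using t1 a1 DM0 by simp
  then have kM1: "kM_sq \<mu> c < 1/2"
  proof -
    assume p: "0 < (t-a)/sqrt DM"
    have h: "(1 - y)/2 < 1/2" if "0<y" for y::real using that by simp
    show ?thesis unfolding kM by (rule h[OF p])
  qed
  have sq: "x / sqrt X = sqrt (x^2 / X)" if "0 \<le> x" for x X :: real
    using that by (simp add: real_sqrt_divide)
  have "(t-a)^2 / DM < (t+a)^2 / DE"
  proof -
    have "(t-a)^2 < (t+a)^2" using t1 a0 a1 by (simp add: power2_eq_square algebra_simps)
    then have "(t-a)^2 * (1 - a^2) < (t+a)^2 * (1-a^2)" using aa by simp
    moreover have "(t-a)^2 * DE = (t-a)^2*(t+a)^2 + (t-a)^2*(1-a^2)" unfolding DE_def by (simp add: distrib_left)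
    moreover have "(t+a)^2 * DM = (t-a)^2*(t+a)^2 + (t+a)^2*(1-a^2)" unfolding DM_def by (simp add: distrib_left)
    ultimately have "(t-a)^2 * DE < (t+a)^2 * DM" by simp
    then show ?thesis using DE0 DM0 by (simp add: divide_simps)
  qed
  then have "(t-a)/sqrt DM < (t+a)/sqrt DE" using sq[of "t-a" DM] sq[of "t+a" DE] t1 a0 a1 by simp
  then have kEM: "kE_sq \<mu> c < kM_sq \<mu> c"
  proof -
    assume p: "(t-a)/sqrt DM < (t+a)/sqrt DE"
    have h: "(1 - x)/2 < (1 - y)/2" if "y<x" for x y::real using that by simp
    show ?thesis unfolding kE kM by (rule h[OF p])
  qed
  have k: "sqrt (1 - 2 * kM_sq \<mu> c) * elliptic_K (sqrt (kM_sq \<mu> c))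
        < sqrt (1 - 2 * kE_sq \<mu> c) * elliptic_K (sqrt (kE_sq \<mu> c))"
    by (rule key) (use kE0 kEM kM1 in auto)
  have "pi/2 \<le> elliptic_K (sqrt (kM_sq \<mu> c))" using K_pos[of "kM_sq \<mu> c"] kE0 kEM kM1 by simp
  then have "0 < elliptic_K (sqrt (kM_sq \<mu> c))" using pi_gt_zero by linarith
  moreover have "0 < sqrt (1 - 2 * kM_sq \<mu> c)" using kM1 by simp
  ultimately have "0 < sqrt (1 - 2 * kM_sq \<mu> c) * elliptic_K (sqrt (kM_sq \<mu> c))" by simp
  then show ?thesis unfolding R_E_ext_def R_M_ext_def using k pi_gt_zero
    by (simp add: frac_less2)
qed

end
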